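(* Let $\mathcal{C}$ be a layered circuit of depth $n^{\delta}$ over an alphabet $\Sigma$ whose symbols are $b\log n$ bits, which has an $n^{\varphi}$-parallel partition. Then there is an algorithm in the (non-faulty) Clique model that computes the function $f_{\mathcal{C}}$ in $O(n^{\delta+\varphi})$ rounds.
   Context: Clique model: $n$ nodes communicate in synchronous rounds; in each round every ordered pair of nodes may exchange a message of $b\log n$ bits, for a fixed constant $b$. $\Sigma$ is an alphabet of size $2^{b\log n}$. Layered circuit of depth $D$ over $\Sigma$: a connected directed graph with gate set $V=V_0\cup\dots\cup V_D$ and wires only from $V_i$ to $V_{i+1}$; each gate $v$ of fan-in $F$ is labeled by $f_v:\Sigma^F\to\Sigma$; gates of $V_0$ are input gates; $f_{\mathcal{C}}$ maps the inputs to the values of the gates of $V_D$. $n^{\varphi}$-parallel partition: a partition of each layer $V_i$ into $n$ parts $P_{i,w}$, $w\in\{0,\dots,n-1\}$ (part $P_{i,w}$ assigned to node $w$), such that for all $i,w$ the number of wires from $P_{i,w}$ to gates of $V_{i+1}\setminus P_{i+1,w}$ and the number of wires into $P_{i+1,w}$ from gates of $V_i\setminus P_{i,w}$ are both $O(n^{1+\varphi})$. An algorithm computes $f_{\mathcal{C}}$ when the circuit inputs are distributed among the nodes according to the parts of $V_0$ and each node $w$ ends holding the values of the gates in its part of the last layer. $\delta,\varphi$ are fixed and $O(\cdot)$ refers to $n\to\infty$. *)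

theory Defs
  imports Complex_Main
begin

definition alphabet :: "nat \<Rightarrow> real \<Rightarrow> nat set" where
  "alphabet n b = {..< 2 ^ nat \<lfloor>b * log 2 (real n)\<rfloor>}"

text \<open>Gates are naturals; layer i is V i;
  wires E only go from V i to V (i+1); the label f v of a non-input gate v is a function
  of the values of its in-neighbours (its fan-in gates), mapping symbols to symbols.\<close>
definition layered_circuit ::
  "nat set \<Rightarrow> nat \<Rightarrow> (nat \<Rightarrow> nat set) \<Rightarrow> (nat \<times> nat) set \<Rightarrow> (nat \<Rightarrow> (nat \<Rightarrow> nat) \<Rightarrow> nat) \<Rightarrow> bool"
where
  "layered_circuit S D V E f \<longleftrightarrow>
     (\<forall>i\<le>D. finite (V i)) \<and>
     (\<forall>i\<le>D. \<forall>j\<le>D. i \<noteq> j \<longrightarrow> V i \<inter> V j = {}) \<and>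
     E \<subseteq> (\<Union>i<D. V i \<times> V (Suc i)) \<and>
     \<comment> \<open>connected directed graph (weakly connected on the gate set)\<close>
     (\<forall>u\<in>(\<Union>i\<le>D. V i). \<forall>v\<in>(\<Union>i\<le>D. V i). (u, v) \<in> (E \<union> E\<inverse>)\<^sup>*) \<and>
     \<comment> \<open>gate labels: functions of the fan-in values only, with values in the alphabet\<close>
     (\<forall>i<D. \<forall>v\<in>V (Suc i).
        (\<forall>x y. (\<forall>u. (u, v) \<in> E \<longrightarrow> x u = y u) \<longrightarrow> f v x = f v y) \<and>
        (\<forall>x. (\<forall>u. (u, v) \<in> E \<longrightarrow> x u \<in> S) \<longrightarrow> f v x \<in> S))"

primrec circ_val :: "(nat \<Rightarrow> (nat \<Rightarrow> nat) \<Rightarrow> nat) \<Rightarrow> (nat \<Rightarrow> nat) \<Rightarrow> nat \<Rightarrow> nat \<Rightarrow> nat" where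
  "circ_val f x 0 = x"
| "circ_val f x (Suc i) = (\<lambda>v. f v (circ_val f x i))"

text \<open>\<open>n^\<phi>\<close>-parallel partition with explicit constant c: owner v is the node w < n whose part
  P_{i,w} = {v \<in> V i. owner v = w} contains v; the numbers of wires leaving P_{i,w}
  to other parts of V (i+1), and entering P_{i+1,w} from other parts of V i, are at most
  c * n^(1+\<phi>).\<close>
definition parallel_partition ::
  "nat \<Rightarrow> real \<Rightarrow> real \<Rightarrow> nat \<Rightarrow> (nat \<Rightarrow> nat set) \<Rightarrow> (nat \<times> nat) set \<Rightarrow> (nat \<Rightarrow> nat) \<Rightarrow> bool"
where
  "parallel_partition n c \<phi> D V E owner \<longleftrightarrow>
     (\<forall>i\<le>D. \<forall>v\<in>V i. owner v < n) \<and>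
     (\<forall>i<D. \<forall>w<n.
        real (card {(u, v) \<in> E. u \<in> V i \<and> owner u = w \<and> v \<in> V (Suc i) \<and> owner v \<noteq> w})
          \<le> c * real n powr (1 + \<phi>) \<and>
        real (card {(u, v) \<in> E. v \<in> V (Suc i) \<and> owner v = w \<and> u \<in> V i \<and> owner u \<noteq> w})
          \<le> c * real n powr (1 + \<phi>))"

text \<open>Execution of a deterministic synchronous Clique algorithm on n nodes.
  init w inp: initial state of node w from its local input;
  msg r u w s: message sent in round r by node u (in state s) to node w;
  step r w s m: new state of node w from its old state and the received messages m u.\<close>
fun clique_run ::
  "nat \<Rightarrow> (nat \<Rightarrow> (nat \<Rightarrow> nat) \<Rightarrow> 's) \<Rightarrow> (nat \<Rightarrow> nat \<Rightarrow> nat \<Rightarrow> 's \<Rightarrow> nat)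
   \<Rightarrow> (nat \<Rightarrow> nat \<Rightarrow> 's \<Rightarrow> (nat \<Rightarrow> nat) \<Rightarrow> 's) \<Rightarrow> (nat \<Rightarrow> (nat \<Rightarrow> nat)) \<Rightarrow> nat \<Rightarrow> nat \<Rightarrow> 's"
where
  "clique_run n init msg step inp 0 w = init w (inp w)"
| "clique_run n init msg step inp (Suc r) w =
     step r w (clique_run n init msg step inp r w)
       (\<lambda>u. if u < n then msg r u w (clique_run n init msg step inp r u) else 0)"

text \<open>The algorithm computes f_C in R rounds: every message is a single alphabet symbol
  (b log n bits); inputs are distributed according to the parts of V 0; after R rounds each
  node w outputs (via out) the values of the gates in its part of V D.\<close>
definition clique_computes ::
  "nat \<Rightarrow> nat set \<Rightarrow> nat \<Rightarrow> (nat \<Rightarrow> nat set) \<Rightarrow> (nat \<Rightarrow> (nat \<Rightarrow> nat) \<Rightarrow> nat) \<Rightarrow> (nat \<Rightarrow> nat)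
   \<Rightarrow> (nat \<Rightarrow> (nat \<Rightarrow> nat) \<Rightarrow> 's) \<Rightarrow> (nat \<Rightarrow> nat \<Rightarrow> nat \<Rightarrow> 's \<Rightarrow> nat)
   \<Rightarrow> (nat \<Rightarrow> nat \<Rightarrow> 's \<Rightarrow> (nat \<Rightarrow> nat) \<Rightarrow> 's) \<Rightarrow> (nat \<Rightarrow> 's \<Rightarrow> nat \<Rightarrow> nat) \<Rightarrow> nat \<Rightarrow> bool"
where
  "clique_computes n S D V f owner init msg step out R \<longleftrightarrow>
     (\<forall>r u w s. msg r u w s \<in> S) \<and>
     (\<forall>x. (\<forall>g\<in>V 0. x g \<in> S) \<longrightarrow>
        (\<forall>w<n. \<forall>v\<in>V D. owner v = w \<longrightarrow>
           out w (clique_run n init msg step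
                    (\<lambda>w' g. if g \<in> V 0 \<and> owner g = w' then x g else 0) R w) v
           = circ_val f x D v))"

end

theory Submission
  imports Defs
begin

lemma greedy_color:
  assumes "finite X" "finite C" "\<And>e e'. R e e' \<Longrightarrow> R e' e"
    "\<And>e. e \<in> X \<Longrightarrow> card {e' \<in> X. e' \<noteq> e \<and> R e e'} \<le> d" "d < card C"
  shows "\<exists>col. (\<forall>e\<in>X. col e \<in> C) \<and> (\<forall>e\<in>X. \<forall>e'\<in>X. e \<noteq> e' \<and> R e e' \<longrightarrow> col e \<noteq> col e')"
  using assms(1,4)
proof (induction X rule: finite_induct)
  case empty then show ?case by simp
next
  case (insert x F)
  have "card {e' \<in> F. e' \<noteq> e \<and> R e e'} \<le> d" if "e \<in> F" for e
  proof -
    have "card {e' \<in> F. e' \<noteq> e \<and> R e e'} \<le> card {e' \<in> insert x F. e' \<noteq> e \<and> R e e'}"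
      by (rule card_mono) (use insert.hyps(1) in auto)
    also have "\<dots> \<le> d" using insert.prems that by blast
    finally show ?thesis .
  qed
  then obtain col where col: "\<forall>e\<in>F. col e \<in> C" "\<forall>e\<in>F. \<forall>e'\<in>F. e \<noteq> e' \<and> R e e' \<longrightarrow> col e \<noteq> col e'"
    using insert.IH by blast
  let ?B = "col ` {e' \<in> F. R x e'}"
  have c1: "card ?B \<le> card {e' \<in> F. R x e'}" by (rule card_image_le) (use insert.hyps(1) in simp)
  have c2: "{e' \<in> F. R x e'} = {e' \<in> insert x F. e' \<noteq> x \<and> R x e'}" using insert.hyps(2) by auto
  have c3: "card {e' \<in> insert x F. e' \<noteq> x \<and> R x e'} \<le> d" using insert.prems by blast
  have lt: "card ?B < card C" using c1 c2 c3 assms(5) by simp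
  have fin: "finite ?B" using insert.hyps(1) by simp
  have "\<not> C \<subseteq> ?B"
  proof
    assume "C \<subseteq> ?B"
    then have "card C \<le> card ?B" by (rule card_mono[OF fin])
    with lt show False by simp
  qed
  then obtain c where c: "c \<in> C" "c \<notin> ?B" by blast
  let ?col = "col(x := c)"
  have "\<forall>e\<in>insert x F. ?col e \<in> C" using col c insert.hyps(2) by auto
  moreover have "\<forall>e\<in>insert x F. \<forall>e'\<in>insert x F. e \<noteq> e' \<and> R e e' \<longrightarrow> ?col e \<noteq> ?col e'"
  proof (intro ballI impI)
    fix e e' assume e: "e \<in> insert x F" "e' \<in> insert x F" "e \<noteq> e' \<and> R e e'"
    show "?col e \<noteq> ?col e'"
    proof (cases "e = x")
      case True
      then have "e' \<in> F" "R x e'" using e by auto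
      then show ?thesis using True c e insert.hyps(2) by auto
    next
      case False
      show ?thesis
      proof (cases "e' = x")
        case True
        then have "e \<in> F" "R x e" using e False assms(3) by auto
        then show ?thesis using True c False by auto
      next
        case False
        then show ?thesis using \<open>e \<noteq> x\<close> e col by auto
      qed
    qed
  qed
  ultimately show ?case by blast
qed

lemma nat_floor_ge: "real k \<le> y \<Longrightarrow> k \<le> nat \<lfloor>y\<rfloor>"
  by (metis floor_mono floor_of_nat nat_int nat_mono)

definition Xset :: "(nat \<Rightarrow> nat set) \<Rightarrow> (nat \<times> nat) set \<Rightarrow> (nat \<Rightarrow> nat) \<Rightarrow> nat \<Rightarrow> (nat \<times> nat) set" where
  "Xset V E owner i = {(u, v) \<in> E. u \<in> V i \<and> v \<in> V (Suc i) \<and> owner u \<noteq> owner v}"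

definition lookup :: "nat list \<Rightarrow> nat \<Rightarrow> nat" where
  "lookup s g = (if g < length s then s ! g else 0)"

lemma lookup_map: "g < M \<Longrightarrow> lookup (map h [0..<M]) g = h g"
  by (simp add: lookup_def)

locale sim =
  fixes n :: nat and S :: "nat set" and D :: nat and V :: "nat \<Rightarrow> nat set"
    and E :: "(nat \<times> nat) set" and f :: "nat \<Rightarrow> (nat \<Rightarrow> nat) \<Rightarrow> nat"
    and owner :: "nat \<Rightarrow> nat" and M L :: nat and col :: "nat \<Rightarrow> nat \<times> nat \<Rightarrow> nat \<times> nat"
  assumes circ: "layered_circuit S D V E f"
    and own: "\<And>i v. i \<le> D \<Longrightarrow> v \<in> V i \<Longrightarrow> owner v < n"
    and bnd: "\<And>i v. i \<le> D \<Longrightarrow> v \<in> V i \<Longrightarrow> v < M"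
    and S0: "0 \<in> S"
    and colr: "\<And>i e. i < D \<Longrightarrow> e \<in> Xset V E owner i \<Longrightarrow> fst (col i e) < n \<and> snd (col i e) < L"
    and colsrc: "\<And>i e e'. i < D \<Longrightarrow> e \<in> Xset V E owner i \<Longrightarrow> e' \<in> Xset V E owner i \<Longrightarrow> e \<noteq> e'
        \<Longrightarrow> owner (fst e) = owner (fst e') \<Longrightarrow> col i e \<noteq> col i e'"
    and coldst: "\<And>i e e'. i < D \<Longrightarrow> e \<in> Xset V E owner i \<Longrightarrow> e' \<in> Xset V E owner i \<Longrightarrow> e \<noteq> e'
        \<Longrightarrow> owner (snd e) = owner (snd e') \<Longrightarrow> col i e \<noteq> col i e'"
begin

lemma c_disj: "\<forall>i\<le>D. \<forall>j\<le>D. i \<noteq> j \<longrightarrow> V i \<inter> V j = {}"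
  using circ unfolding layered_circuit_def by (elim conjE)

lemma c_E: "E \<subseteq> (\<Union>i<D. V i \<times> V (Suc i))"
  using circ unfolding layered_circuit_def by (elim conjE)

lemma c_f: "\<forall>i<D. \<forall>v\<in>V (Suc i).
        (\<forall>x y. (\<forall>u. (u, v) \<in> E \<longrightarrow> x u = y u) \<longrightarrow> f v x = f v y) \<and>
        (\<forall>x. (\<forall>u. (u, v) \<in> E \<longrightarrow> x u \<in> S) \<longrightarrow> f v x \<in> S)"
  using circ unfolding layered_circuit_def by (elim conjE)

lemma disj: "i \<le> D \<Longrightarrow> j \<le> D \<Longrightarrow> g \<in> V i \<Longrightarrow> g \<in> V j \<Longrightarrow> i = j"
  using c_disj by blast

lemma inE: "i < D \<Longrightarrow> g \<in> V (Suc i) \<Longrightarrow> (u, g) \<in> E \<Longrightarrow> u \<in> V i"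
proof -
  assume a: "i < D" "g \<in> V (Suc i)" "(u, g) \<in> E"
  with c_E obtain j where j: "j < D" "u \<in> V j" "g \<in> V (Suc j)" by blast
  with a disj[of "Suc i" "Suc j" g] have "i = j" by simp
  with j show ?thesis by simp
qed

lemma fanin: "i < D \<Longrightarrow> v \<in> V (Suc i) \<Longrightarrow> (\<And>u. (u, v) \<in> E \<Longrightarrow> x u = y u) \<Longrightarrow> f v x = f v y"
  using c_f by blast

lemma closure: "i < D \<Longrightarrow> v \<in> V (Suc i) \<Longrightarrow> (\<And>u. (u, v) \<in> E \<Longrightarrow> x u \<in> S) \<Longrightarrow> f v x \<in> S"
  using c_f by blast

lemma cv_S: "(\<And>g. g \<in> V 0 \<Longrightarrow> x g \<in> S) \<Longrightarrow> i \<le> D \<Longrightarrow> g \<in> V i \<Longrightarrow> circ_val f x i g \<in> S"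
proof (induction i arbitrary: g)
  case 0
  then show ?case by simp
next
  case (Suc i)
  have "circ_val f x (Suc i) g = f g (circ_val f x i)" by simp
  also have "\<dots> \<in> S"
    by (rule closure) (use Suc inE in auto)
  finally show ?case .
qed

definition T :: nat where "T = 2 * L + 1"

definition item1 :: "nat \<Rightarrow> nat \<Rightarrow> nat \<Rightarrow> nat \<times> nat \<Rightarrow> bool" where
  "item1 r a w e \<longleftrightarrow> r div T < D \<and> r mod T < L \<and> e \<in> Xset V E owner (r div T)
     \<and> owner (fst e) = a \<and> col (r div T) e = (w, r mod T)"

definition item2 :: "nat \<Rightarrow> nat \<Rightarrow> nat \<Rightarrow> nat \<times> nat \<Rightarrow> bool" where
  "item2 r a w e \<longleftrightarrow> r div T < D \<and> L \<le> r mod T \<and> e \<in> Xset V E owner (r div T)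
     \<and> owner (snd e) = w \<and> col (r div T) e = (a, r mod T - L)"

definition sched :: "nat \<Rightarrow> nat \<Rightarrow> nat \<Rightarrow> nat option" where
  "sched r a w = (if \<exists>e. item1 r a w e \<or> item2 r a w e
     then Some (fst (SOME e. item1 r a w e \<or> item2 r a w e)) else None)"

lemma sched1: assumes "item1 r a w e" shows "sched r a w = Some (fst e)"
proof -
  let ?e = "SOME e. item1 r a w e \<or> item2 r a w e"
  have "item1 r a w ?e \<or> item2 r a w ?e" using assms by (metis (mono_tags, lifting) someI)
  hence "item1 r a w ?e" using assms unfolding item1_def item2_def by auto
  hence "?e = e" using assms colsrc[of "r div T" ?e e] unfolding item1_def by auto
  moreover have "\<exists>e. item1 r a w e \<or> item2 r a w e" using assms by blast
  ultimately show ?thesis unfolding sched_def by simp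
qed

lemma sched2: assumes "item2 r a w e" shows "sched r a w = Some (fst e)"
proof -
  let ?e = "SOME e. item1 r a w e \<or> item2 r a w e"
  have "item1 r a w ?e \<or> item2 r a w ?e" using assms by (metis (mono_tags, lifting) someI)
  hence "item2 r a w ?e" using assms unfolding item1_def item2_def by auto
  hence "?e = e" using assms coldst[of "r div T" ?e e] unfolding item2_def by auto
  moreover have "\<exists>e. item1 r a w e \<or> item2 r a w e" using assms by blast
  ultimately show ?thesis unfolding sched_def by simp
qed

definition recv :: "(nat \<Rightarrow> nat \<Rightarrow> nat set) \<Rightarrow> nat \<Rightarrow> nat \<Rightarrow> nat \<Rightarrow> bool" where
  "recv K r w g \<longleftrightarrow> (\<exists>a<n. sched r a w = Some g \<and> g \<in> K r a)"

definition comp :: "(nat \<Rightarrow> nat \<Rightarrow> nat set) \<Rightarrow> nat \<Rightarrow> nat \<Rightarrow> nat \<Rightarrow> bool" where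
  "comp K r w g \<longleftrightarrow> (\<exists>i<D. g \<in> V (Suc i) \<and> owner g = w \<and> (\<forall>u. (u, g) \<in> E \<longrightarrow> u \<in> K r w))"

primrec K :: "nat \<Rightarrow> nat \<Rightarrow> nat set" where
  "K 0 w = {g \<in> V 0. owner g = w}"
| "K (Suc r) w = K r w \<union> {g. \<exists>a<n. sched r a w = Some g \<and> g \<in> K r a}
     \<union> {g. \<exists>i<D. g \<in> V (Suc i) \<and> owner g = w \<and> (\<forall>u. (u, g) \<in> E \<longrightarrow> u \<in> K r w)}"

lemma K_Suc: "K (Suc r) w = K r w \<union> {g. recv K r w g} \<union> {g. comp K r w g}"
  unfolding recv_def comp_def by simp

lemma K_gate: "g \<in> K r w \<Longrightarrow> \<exists>i\<le>D. g \<in> V i"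
proof (induction r arbitrary: w g)
  case 0 then show ?case by auto
next
  case (Suc r)
  then show ?case unfolding K.simps
  proof (elim UnE CollectE)
    assume "g \<in> K r w" then show ?thesis using Suc.IH by blast
  next
    assume "\<exists>a<n. sched r a w = Some g \<and> g \<in> K r a" then show ?thesis using Suc.IH by blast
  next
    assume "\<exists>i<D. g \<in> V (Suc i) \<and> owner g = w \<and> (\<forall>u. (u, g) \<in> E \<longrightarrow> u \<in> K r w)"
    then obtain i where "i < D" "g \<in> V (Suc i)" by blast
    then show ?thesis using Suc_leI by blast
  qed
qed

definition init :: "nat \<Rightarrow> (nat \<Rightarrow> nat) \<Rightarrow> nat list" where
  "init w inp = map (\<lambda>g. if g \<in> V 0 \<and> owner g = w then inp g else 0) [0..<M]"

definition msg :: "nat \<Rightarrow> nat \<Rightarrow> nat \<Rightarrow> nat list \<Rightarrow> nat" where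
  "msg r a w s = (case sched r a w of Some g \<Rightarrow> (if lookup s g \<in> S then lookup s g else 0) | None \<Rightarrow> 0)"

definition step :: "nat \<Rightarrow> nat \<Rightarrow> nat list \<Rightarrow> (nat \<Rightarrow> nat) \<Rightarrow> nat list" where
  "step r w s m = map (\<lambda>g. if g \<in> K r w then lookup s g
      else if recv K r w g then m (SOME a. a < n \<and> sched r a w = Some g \<and> g \<in> K r a)
      else if comp K r w g then f g (lookup s) else 0) [0..<M]"

definition out :: "nat \<Rightarrow> nat list \<Rightarrow> nat \<Rightarrow> nat" where
  "out w s v = lookup s v"

lemma msg_S: "msg r a w s \<in> S"
  unfolding msg_def using S0 by (auto split: option.split)

lemma safe:
  assumes xS: "\<And>g. g \<in> V 0 \<Longrightarrow> x g \<in> S"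
  shows "w < n \<Longrightarrow> i \<le> D \<Longrightarrow> g \<in> V i \<Longrightarrow> g \<in> K r w \<Longrightarrow>
    lookup (clique_run n init msg step (\<lambda>w' g. if g \<in> V 0 \<and> owner g = w' then x g else 0) r w) g
      = circ_val f x i g"
proof (induction r arbitrary: w i g)
  case 0
  hence "i = 0" using disj[of i 0 g] by auto
  with 0 show ?case using bnd[of i g] by (simp add: init_def lookup_map)
next
  case (Suc r)
  let ?run = "clique_run n init msg step (\<lambda>w' g. if g \<in> V 0 \<and> owner g = w' then x g else 0)"
  have gM: "g < M" using bnd Suc.prems by blast
  have eq: "lookup (?run (Suc r) w) g =
     (if g \<in> K r w then lookup (?run r w) g
      else if recv K r w g then (\<lambda>u. if u < n then msg r u w (?run r u) else 0)
         (SOME a. a < n \<and> sched r a w = Some g \<and> g \<in> K r a)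
      else if comp K r w g then f g (lookup (?run r w)) else 0)"
    by (simp add: step_def lookup_map[OF gM])
  show ?case
  proof (cases "g \<in> K r w")
    case True
    then show ?thesis using eq Suc by simp
  next
    case nK: False
    show ?thesis
    proof (cases "recv K r w g")
      case True
      let ?a = "SOME a. a < n \<and> sched r a w = Some g \<and> g \<in> K r a"
      have a: "?a < n \<and> sched r ?a w = Some g \<and> g \<in> K r ?a"
        using True unfolding recv_def by (rule someI_ex)
      have "lookup (?run (Suc r) w) g = msg r ?a w (?run r ?a)"
        using eq nK True a by simp
      have inS: "circ_val f x i g \<in> S" by (rule cv_S) (use xS Suc.prems in auto)
      have lk: "lookup (?run r ?a) g = circ_val f x i g" by (rule Suc.IH) (use a Suc.prems in auto)
      have "msg r ?a w (?run r ?a) = circ_val f x i g"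
        using a inS lk by (simp add: msg_def)
      with \<open>lookup (?run (Suc r) w) g = msg r ?a w (?run r ?a)\<close> show ?thesis by simp
    next
      case nR: False
      with nK Suc.prems have c: "comp K r w g" by (auto simp: recv_def comp_def)
      then obtain j where j: "j < D" "g \<in> V (Suc j)" "\<forall>u. (u, g) \<in> E \<longrightarrow> u \<in> K r w"
        unfolding comp_def by blast
      have ij: "i = Suc j" using disj[of i "Suc j" g] j Suc.prems by simp
      have "lookup (?run (Suc r) w) g = f g (lookup (?run r w))" using eq nK nR c by simp
      also have "\<dots> = f g (circ_val f x j)"
      proof (rule fanin[OF j(1,2)])
        fix u assume u: "(u, g) \<in> E"
        have uj: "u \<in> V j" using inE[OF j(1,2) u] .
        have uK: "u \<in> K r w" using j(3) u by blast
        show "lookup (?run r w) u = circ_val f x j u"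
          by (rule Suc.IH) (use uj uK Suc.prems j(1) in auto)
      qed
      finally show ?thesis using ij by simp
    qed
  qed
qed


lemma K_mono1: "K r w \<subseteq> K (Suc r) w"
  by auto

lemma K_mono: "r \<le> r' \<Longrightarrow> K r w \<subseteq> K r' w"
proof (induction rule: dec_induct)
  case base then show ?case by simp
next
  case (step m) then show ?case using K_mono1[of m w] by blast
qed

lemma T_pos: "0 < T" by (simp add: T_def)

lemma dm: "s < T \<Longrightarrow> (i * T + s) div T = i \<and> (i * T + s) mod T = s"
  using T_pos by simp

lemma phase: "i \<le> D \<Longrightarrow> w < n \<Longrightarrow> g \<in> V i \<Longrightarrow> owner g = w \<Longrightarrow> g \<in> K (i * T) w"
proof (induction i arbitrary: w g)
  case 0 then show ?case by simp
next
  case (Suc i)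
  have iD: "i < D" using Suc.prems by simp
  have A: "fst e \<in> K (i * T + 2 * L) (owner (snd e))" if eX: "e \<in> Xset V E owner i" for e
  proof -
    obtain k s where ks: "col i e = (k, s)" by (cases "col i e")
    have kn: "k < n" and sL: "s < L" using colr[OF iD eX] unfolding ks by simp_all
    have fV: "fst e \<in> V i" and sV: "snd e \<in> V (Suc i)" using eX unfolding Xset_def by (cases e; simp)+
    define a where "a = owner (fst e)"
    have an: "a < n" unfolding a_def by (rule own[OF _ fV]) (use iD in simp)
    have k0: "fst e \<in> K (i * T) a" by (rule Suc.IH) (use iD fV an a_def in simp_all)
    define r1 where "r1 = i * T + s"
    have d1: "r1 div T = i \<and> r1 mod T = s" unfolding r1_def by (rule dm) (use sL in \<open>simp add: T_def\<close>)
    have "item1 r1 a k e" unfolding item1_def using d1 iD sL eX a_def ks by simp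
    hence s1: "sched r1 a k = Some (fst e)" by (rule sched1)
    have "fst e \<in> K r1 a" using k0 K_mono[of "i * T" r1 a] r1_def by auto
    hence k1: "fst e \<in> K (Suc r1) k" using s1 an by auto
    define r2 where "r2 = i * T + (L + s)"
    have d2: "r2 div T = i \<and> r2 mod T = L + s" unfolding r2_def by (rule dm) (use sL in \<open>simp add: T_def\<close>)
    have "item2 r2 k (owner (snd e)) e" unfolding item2_def using d2 iD eX ks by simp
    hence s2: "sched r2 k (owner (snd e)) = Some (fst e)" by (rule sched2)
    have "fst e \<in> K r2 k" using k1 K_mono[of "Suc r1" r2 k] r1_def r2_def sL by auto
    hence "fst e \<in> K (Suc r2) (owner (snd e))" using s2 kn by auto
    thus ?thesis using K_mono[of "Suc r2" "i * T + 2 * L" "owner (snd e)"] r2_def sL by auto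
  qed
  define r3 where "r3 = i * T + 2 * L"
  have "\<forall>u. (u, g) \<in> E \<longrightarrow> u \<in> K r3 w"
  proof (intro allI impI)
    fix u assume uE: "(u, g) \<in> E"
    have uV: "u \<in> V i" using inE[OF iD _ uE] Suc.prems by simp
    show "u \<in> K r3 w"
    proof (cases "owner u = w")
      case True
      hence "u \<in> K (i * T) w" using Suc.IH[of w u] iD uV Suc.prems by simp
      thus ?thesis using K_mono[of "i * T" r3 w] r3_def by auto
    next
      case False
      hence "(u, g) \<in> Xset V E owner i" using uE uV Suc.prems unfolding Xset_def by auto
      from A[OF this] show ?thesis using Suc.prems r3_def by simp
    qed
  qed
  hence "g \<in> K (Suc r3) w" using Suc.prems iD by auto
  moreover have "Suc r3 = Suc i * T" unfolding r3_def T_def by simp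
  ultimately show ?case by simp
qed

lemma computes: "clique_computes n S D V f owner init msg step out (D * T)"
  unfolding clique_computes_def
proof (intro conjI allI impI ballI)
  fix r u w s show "msg r u w s \<in> S" by (rule msg_S)
next
  fix x w v assume xS: "\<forall>g\<in>V 0. x g \<in> S" and w: "w < n" and v: "v \<in> V D" and ow: "owner v = w"
  have "v \<in> K (D * T) w" using phase[of D w v] w v ow by simp
  thus "out w (clique_run n init msg step (\<lambda>w' g. if g \<in> V 0 \<and> owner g = w' then x g else 0) (D * T) w) v
      = circ_val f x D v"
    unfolding out_def using safe[of x w D v "D * T"] xS w v by simp
qed

end
theorem lemma3:
  fixes b \<delta> \<phi> c :: real
  assumes "b > 0" and "\<delta> \<ge> 0" and "\<phi> \<ge> 0" and "c > 0"
  shows "\<exists>C N. \<forall>n \<ge> N. \<forall>D V E f owner.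
           layered_circuit (alphabet n b) D V E f \<and> real D \<le> real n powr \<delta> \<and>
           parallel_partition n c \<phi> D V E owner \<longrightarrow>
           (\<exists>(init :: nat \<Rightarrow> (nat \<Rightarrow> nat) \<Rightarrow> nat list) msg step out R.
              real R \<le> C * real n powr (\<delta> + \<phi>) \<and>
              clique_computes n (alphabet n b) D V f owner init msg step out R)"
proof (rule exI[of _ "4 * c + 3"], rule exI[of _ 1], intro allI impI)
  fix n :: nat and D V E f owner
  assume n1: "1 \<le> n"
  assume H: "layered_circuit (alphabet n b) D V E f \<and> real D \<le> real n powr \<delta> \<and>
           parallel_partition n c \<phi> D V E owner"
  define S where "S = alphabet n b"
  have circ: "layered_circuit S D V E f" and Dn: "real D \<le> real n powr \<delta>"
    and pp: "parallel_partition n c \<phi> D V E owner" using H S_def by auto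
  have own: "\<And>i v. i \<le> D \<Longrightarrow> v \<in> V i \<Longrightarrow> owner v < n" using pp unfolding parallel_partition_def by blast
  have ppc: "\<And>i w. i < D \<Longrightarrow> w < n \<Longrightarrow>
        real (card {(u, v) \<in> E. u \<in> V i \<and> owner u = w \<and> v \<in> V (Suc i) \<and> owner v \<noteq> w})
          \<le> c * real n powr (1 + \<phi>) \<and>
        real (card {(u, v) \<in> E. v \<in> V (Suc i) \<and> owner v = w \<and> u \<in> V i \<and> owner u \<noteq> w})
          \<le> c * real n powr (1 + \<phi>)" using pp unfolding parallel_partition_def by blast
  have finV: "\<And>i. i \<le> D \<Longrightarrow> finite (V i)" using circ unfolding layered_circuit_def by (elim conjE) blast
  define G where "G = (\<Union>i\<le>D. V i)"
  have finG: "finite G" unfolding G_def using finV by auto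
  define M where "M = Suc (Max G)"
  have bnd: "\<And>i v. i \<le> D \<Longrightarrow> v \<in> V i \<Longrightarrow> v < M"
  proof -
    fix i v assume "i \<le> D" "v \<in> V i"
    hence "v \<in> G" unfolding G_def by blast
    thus "v < M" unfolding M_def using finG by (simp add: le_imp_less_Suc)
  qed
  have S0: "0 \<in> S" unfolding S_def alphabet_def by simp
  define \<Delta> where "\<Delta> = nat \<lfloor>c * real n powr (1 + \<phi>)\<rfloor>"
  define L where "L = 2 * \<Delta> div n + 1"
  have nL: "2 * \<Delta> < card ({..<n} \<times> {..<L})"
  proof -
    have e1: "2 * \<Delta> = n * (2 * \<Delta> div n) + 2 * \<Delta> mod n" by simp
    have e2: "2 * \<Delta> mod n < n" using n1 by simp
    have e3: "n * L = n * (2 * \<Delta> div n) + n" unfolding L_def by simp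
    have "2 * \<Delta> < n * L" using e1 e2 e3 by linarith
    thus ?thesis by simp
  qed
  define X where "X = Xset V E owner"
  define R where "R = (\<lambda>e e' :: nat \<times> nat. owner (fst e) = owner (fst e') \<or> owner (snd e) = owner (snd e'))"
  have colex: "\<exists>col. (\<forall>e\<in>X i. col e \<in> {..<n} \<times> {..<L}) \<and>
      (\<forall>e\<in>X i. \<forall>e'\<in>X i. e \<noteq> e' \<and> R e e' \<longrightarrow> col e \<noteq> col e')" if iD: "i < D" for i
  proof (rule greedy_color)
    have "X i \<subseteq> V i \<times> V (Suc i)" unfolding X_def Xset_def by auto
    thus "finite (X i)" using finV iD by (meson Suc_leI finite_SigmaI less_imp_le rev_finite_subset)
    show "finite ({..<n} \<times> {..<L})" by simp
    show "\<And>e e'. R e e' \<Longrightarrow> R e' e" unfolding R_def by auto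
    show "2 * \<Delta> < card ({..<n} \<times> {..<L})" by (rule nL)
  next
    fix e assume eX: "e \<in> X i"
    obtain u v where e: "e = (u, v)" by (cases e)
    have uV: "u \<in> V i" and vV: "v \<in> V (Suc i)" and uvE: "(u, v) \<in> E" and ne: "owner u \<noteq> owner v"
      using eX unfolding X_def Xset_def e by auto
    have un: "owner u < n" using own[of i u] uV iD by simp
    have vn: "owner v < n" using own[of "Suc i" v] vV iD by simp
    have A1: "{e' \<in> X i. owner (fst e') = owner u} =
      {(u', v') \<in> E. u' \<in> V i \<and> owner u' = owner u \<and> v' \<in> V (Suc i) \<and> owner v' \<noteq> owner u}"
      unfolding X_def Xset_def by auto
    have A2: "{e' \<in> X i. owner (snd e') = owner v} =
      {(u', v') \<in> E. v' \<in> V (Suc i) \<and> owner v' = owner v \<and> u' \<in> V i \<and> owner u' \<noteq> owner v}"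
      unfolding X_def Xset_def by auto
    have finX: "finite (X i)"
    proof -
      have "X i \<subseteq> V i \<times> V (Suc i)" unfolding X_def Xset_def by auto
      thus ?thesis using finV iD by (meson Suc_leI finite_SigmaI less_imp_le rev_finite_subset)
    qed
    have B1: "card {e' \<in> X i. owner (fst e') = owner u} \<le> \<Delta>"
      unfolding A1 \<Delta>_def by (rule nat_floor_ge) (use ppc[OF iD un] in blast)
    have B2: "card {e' \<in> X i. owner (snd e') = owner v} \<le> \<Delta>"
      unfolding A2 \<Delta>_def by (rule nat_floor_ge) (use ppc[OF iD vn] in blast)
    have "{e' \<in> X i. e' \<noteq> e \<and> R e e'} \<subseteq>
        {e' \<in> X i. owner (fst e') = owner u} \<union> {e' \<in> X i. owner (snd e') = owner v}"
      unfolding R_def e by auto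
    hence "card {e' \<in> X i. e' \<noteq> e \<and> R e e'} \<le>
        card ({e' \<in> X i. owner (fst e') = owner u} \<union> {e' \<in> X i. owner (snd e') = owner v})"
      by (rule card_mono[rotated]) (use finX in simp)
    also have "\<dots> \<le> card {e' \<in> X i. owner (fst e') = owner u} + card {e' \<in> X i. owner (snd e') = owner v}"
      by (rule card_Un_le)
    also have "\<dots> \<le> 2 * \<Delta>" using B1 B2 by simp
    finally show "card {e' \<in> X i. e' \<noteq> e \<and> R e e'} \<le> 2 * \<Delta>" .
  qed
  hence "\<forall>i\<in>{..<D}. \<exists>col. (\<forall>e\<in>X i. col e \<in> {..<n} \<times> {..<L}) \<and>
      (\<forall>e\<in>X i. \<forall>e'\<in>X i. e \<noteq> e' \<and> R e e' \<longrightarrow> col e \<noteq> col e')" by blast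
  then obtain col where col: "\<And>i. i < D \<Longrightarrow> (\<forall>e\<in>X i. col i e \<in> {..<n} \<times> {..<L}) \<and>
      (\<forall>e\<in>X i. \<forall>e'\<in>X i. e \<noteq> e' \<and> R e e' \<longrightarrow> col i e \<noteq> col i e')"
    using bchoice[of "{..<D}"] by (metis lessThan_iff)
  interpret s: sim n S D V E f owner M L col
  proof
    show "layered_circuit S D V E f" by (rule circ)
    show "\<And>i v. i \<le> D \<Longrightarrow> v \<in> V i \<Longrightarrow> owner v < n" by (rule own)
    show "\<And>i v. i \<le> D \<Longrightarrow> v \<in> V i \<Longrightarrow> v < M" by (rule bnd)
    show "0 \<in> S" by (rule S0)
    show "\<And>i e. i < D \<Longrightarrow> e \<in> Xset V E owner i \<Longrightarrow> fst (col i e) < n \<and> snd (col i e) < L"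
      using col unfolding X_def by fastforce
    show "\<And>i e e'. i < D \<Longrightarrow> e \<in> Xset V E owner i \<Longrightarrow> e' \<in> Xset V E owner i \<Longrightarrow> e \<noteq> e'
        \<Longrightarrow> owner (fst e) = owner (fst e') \<Longrightarrow> col i e \<noteq> col i e'"
      using col unfolding X_def R_def by blast
    show "\<And>i e e'. i < D \<Longrightarrow> e \<in> Xset V E owner i \<Longrightarrow> e' \<in> Xset V E owner i \<Longrightarrow> e \<noteq> e'
        \<Longrightarrow> owner (snd e) = owner (snd e') \<Longrightarrow> col i e \<noteq> col i e'"
      using col unfolding X_def R_def by blast
  qed
  have np: "real n powr \<phi> \<ge> 1" using n1 assms(3) by (simp add: ge_one_powr_ge_zero)
  have npos: "real n > 0" using n1 by simp
  have "real \<Delta> \<le> c * real n powr (1 + \<phi>)"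
    unfolding \<Delta>_def using assms(4) npos by (simp add: of_nat_nat)
  also have "\<dots> = c * real n * real n powr \<phi>" using npos by (simp add: powr_add)
  finally have Dl: "real \<Delta> \<le> c * real n * real n powr \<phi>" .
  have "real (2 * \<Delta> div n) \<le> real (2 * \<Delta>) / real n" by (rule of_nat_div_le_of_nat)
  also have "\<dots> \<le> 2 * c * real n powr \<phi>" using Dl npos by (simp add: field_simps)
  finally have "real L \<le> 2 * c * real n powr \<phi> + 1" unfolding L_def by simp
  hence "real s.T \<le> 4 * c * real n powr \<phi> + 3" unfolding s.T_def by simp
  also have "\<dots> \<le> (4 * c + 3) * real n powr \<phi>" using np by (simp add: algebra_simps)
  finally have Tb: "real s.T \<le> (4 * c + 3) * real n powr \<phi>" .
  have "real (D * s.T) = real D * real s.T" by simp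
  also have "\<dots> \<le> real n powr \<delta> * ((4 * c + 3) * real n powr \<phi>)"
    by (rule mult_mono[OF Dn Tb]) simp_all
  also have "\<dots> = (4 * c + 3) * real n powr (\<delta> + \<phi>)" by (simp add: powr_add)
  finally have Rb: "real (D * s.T) \<le> (4 * c + 3) * real n powr (\<delta> + \<phi>)" .
  show "\<exists>(init :: nat \<Rightarrow> (nat \<Rightarrow> nat) \<Rightarrow> nat list) msg step out R.
              real R \<le> (4 * c + 3) * real n powr (\<delta> + \<phi>) \<and>
              clique_computes n (alphabet n b) D V f owner init msg step out R"
    using Rb s.computes unfolding S_def by blast
qed

end
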